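(* Let $w$ and $w''$ be two words with nonnegative integer letters of the same length. If $\mathrm{Zero}\,w=\mathrm{Zero}\,w''$ and $\mathrm{DES}\,\mathrm{Pos}\,w=\mathrm{DES}\,\mathrm{Pos}\,w''$, then $\mathrm{Zero}\,{\bf F}_3(w)=\mathrm{Zero}\,{\bf F}_3(w'')$.
   Context: For a word $w=x_1\cdots x_n$ with nonnegative integer letters: $\mathrm{DES}\,w=\{i:1\le i\le n-1,\ x_i>x_{i+1}\}$; $\mathrm{Zero}\,w=\{i:x_i=0\}$; $\mathrm{Pos}\,w$ is the subword of positive letters of $w$. The map ${\bf F}_3$ on all finite words with nonnegative letters is defined by induction on the length $n$. If $n\le1$, or if all letters of $w$ other than the last are $0$, then ${\bf F}_3(w)=w$. Otherwise write uniquely $w=w'a0^rb$, where $a\ge1$ is the rightmost positive letter among the first $n-1$ letters, $r\ge0$, $b\ge0$ is the last letter and $w'$ is a possibly empty word. (1) If $a\le b$: ${\bf F}_3(w)={\bf F}_3(w'a0^r)\,b$. (2) If $a>b$ and $r\ge1$: writing ${\bf F}_3(w'a0^r)=w''c$ with $c$ a letter, ${\bf F}_3(w)=0\,w''\,b$. (3) If $a>b$ and $r=0$: writing ${\bf F}_3(w'a)=0^{m_1}x_1v_10^{m_2}x_2v_2\cdots0^{m_k}x_kv_k$ with $m_1\ge0$, $m_2,\dots,m_k\ge1$, $x_1,\dots,x_k$ positive letters and $v_1,\dots,v_k$ possibly empty words of positive letters, ${\bf F}_3(w)=x_10^{m_1}v_1x_20^{m_2}v_2\cdots x_k0^{m_k}v_k\,b$.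 *)

theory Defs
  imports Main
begin

(* Words are lists of natural numbers; positions are 1-indexed as in the paper. *)

definition DES :: "nat list \<Rightarrow> nat set" where
  "DES w = {i. 1 \<le> i \<and> i \<le> length w - 1 \<and> w ! (i - 1) > w ! i}"

definition Zero :: "nat list \<Rightarrow> nat set" where
  "Zero w = {i. 1 \<le> i \<and> i \<le> length w \<and> w ! (i - 1) = 0}"

definition Pos :: "nat list \<Rightarrow> nat list" where
  "Pos w = filter (\<lambda>x. 0 < x) w"

(* The block transformation of case (3):
   0^{m1} x1 v1 0^{m2} x2 v2 ... 0^{mk} xk vk  \<mapsto>  x1 0^{m1} v1 x2 0^{m2} v2 ... xk 0^{mk} vk.
   Blocks are: a maximal run of zeros, a positive letter x, then a maximal run of positive letters v.
   (A trailing run of zeros, which never arises in the use below, is left unchanged.) *)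
function swapblocks :: "nat list \<Rightarrow> nat list" where
  "swapblocks l =
     (let zs = takeWhile (\<lambda>x. x = 0) l; rest = dropWhile (\<lambda>x. x = 0) l in
      if rest = [] then l
      else hd rest # zs @ takeWhile (\<lambda>x. 0 < x) (tl rest)
             @ swapblocks (dropWhile (\<lambda>x. 0 < x) (tl rest)))"
  by auto
termination
proof (relation "measure length")
  fix l :: "nat list" and zs rest
  assume "zs = takeWhile (\<lambda>x. x = 0) l" "rest = dropWhile (\<lambda>x. x = 0) l" "rest \<noteq> []"
  then have "length (tl rest) < length rest" by simp
  moreover have "length rest \<le> length l"
    using \<open>rest = _\<close> length_dropWhile_le by simp
  moreover have "length (dropWhile (\<lambda>x. 0 < x) (tl rest)) \<le> length (tl rest)"
    by (rule length_dropWhile_le)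
  ultimately have "length (dropWhile (\<lambda>x. 0 < x) (tl rest)) < length l" by linarith
  then show "(dropWhile (\<lambda>x. 0 < x) (tl rest), l) \<in> measure length" by simp
qed simp

(* The map F_3, defined by induction on the length.  With u = butlast w = w' a 0^r, b = last w. *)
function F3 :: "nat list \<Rightarrow> nat list" where
  "F3 w =
    (if length w \<le> 1 \<or> (\<forall>x\<in>set (butlast w). x = 0) then w
     else
       (let u = butlast w; b = last w;
            r = length (takeWhile (\<lambda>x. x = 0) (rev u));
            a = u ! (length u - r - 1)
        in if a \<le> b then F3 u @ [b]
           else if 1 \<le> r then 0 # butlast (F3 u) @ [b]
           else swapblocks (F3 u) @ [b]))"
  by auto
termination
  by (relation "measure length") auto

end

theory Submission
  imports Defs
begin

declare F3.simps[simp del] swapblocks.simps[simp del]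

definition zp :: "nat list \<Rightarrow> bool list" where
  "zp w = map (\<lambda>x. x = 0) w"

lemma zp_simps[simp]: "zp [] = []" "zp (x # xs) = (x = 0) # zp xs"
  "zp (xs @ ys) = zp xs @ zp ys" "zp (butlast xs) = butlast (zp xs)"
  "zp (rev xs) = rev (zp xs)" "zp (tl xs) = tl (zp xs)" "length (zp xs) = length xs"
  by (auto simp: zp_def map_butlast rev_map map_tl)

lemma zp_tW0: "zp (takeWhile (\<lambda>x. x = 0) v) = takeWhile id (zp v)"
  by (induction v) auto
lemma zp_dW0: "zp (dropWhile (\<lambda>x. x = 0) v) = dropWhile id (zp v)"
  by (induction v) auto
lemma zp_tWp: "zp (takeWhile (\<lambda>x. 0 < x) v) = takeWhile Not (zp v)"
  by (induction v) auto
lemma zp_dWp: "zp (dropWhile (\<lambda>x. 0 < x) v) = dropWhile Not (zp v)"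
  by (induction v) auto

lemma zp_eq_Nil: "(zp v = []) = (v = [])" by (simp add: zp_def)

lemma zp_hd: "v \<noteq> [] \<Longrightarrow> hd (zp v) = (hd v = 0)"
  by (cases v) auto

lemma swapblocks_len: "length (swapblocks v) = length v"
proof (induction v rule: swapblocks.induct)
  case (1 l)
  show ?case
  proof (cases "dropWhile (\<lambda>x. x = 0) l = []")
    case True
    then show ?thesis by (subst swapblocks.simps) (simp add: Let_def)
  next
    case False
    have e: "length l = length (takeWhile (\<lambda>x. x = 0) l) + length (dropWhile (\<lambda>x. x = 0) l)"
      by (metis length_append takeWhile_dropWhile_id)
    have e2: "length (tl (dropWhile (\<lambda>x. x = 0) l)) = length (takeWhile (\<lambda>x. 0 < x) (tl (dropWhile (\<lambda>x. x = 0) l))) + length (dropWhile (\<lambda>x. 0 < x) (tl (dropWhile (\<lambda>x. x = 0) l)))"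
      by (metis length_append takeWhile_dropWhile_id)
    have p: "length (dropWhile (\<lambda>x. x = 0) l) > 0" using False by blast
    show ?thesis
      apply (subst swapblocks.simps)
      apply (simp only: Let_def False if_False length_Cons length_append 1[OF refl refl False])
      using e e2 p length_tl[of "dropWhile (\<lambda>x. x = 0) l"] by linarith
  qed
qed

lemma sb_nil: "dropWhile (\<lambda>x. x = 0) l = [] \<Longrightarrow> swapblocks l = l"
  by (subst swapblocks.simps) (simp only: Let_def if_True simp_thms)

lemma sb_cons: "dropWhile (\<lambda>x. x = 0) l \<noteq> [] \<Longrightarrow> swapblocks l =
   hd (dropWhile (\<lambda>x. x = 0) l) # takeWhile (\<lambda>x. x = 0) l @ takeWhile (\<lambda>x. 0 < x) (tl (dropWhile (\<lambda>x. x = 0) l))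
             @ swapblocks (dropWhile (\<lambda>x. 0 < x) (tl (dropWhile (\<lambda>x. x = 0) l)))"
  by (subst swapblocks.simps) (simp only: Let_def if_False simp_thms)

lemma swapblocks_zp: "zp v = zp v' \<Longrightarrow> zp (swapblocks v) = zp (swapblocks v')"
proof (induction v arbitrary: v' rule: swapblocks.induct)
  case (1 l)
  have d: "zp (dropWhile (\<lambda>x. x = 0) l) = zp (dropWhile (\<lambda>x. x = 0) v')"
    using 1(2) by (simp only: zp_dW0)
  have tw: "zp (takeWhile (\<lambda>x. x = 0) l) = zp (takeWhile (\<lambda>x. x = 0) v')"
    using 1(2) by (simp only: zp_tW0)
  show ?case
  proof (cases "dropWhile (\<lambda>x. x = 0) l = []")
    case True
    have "zp (dropWhile (\<lambda>x. x = 0) v') = []" using d True by (simp only: zp_simps(1))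
    then have "dropWhile (\<lambda>x. x = 0) v' = []" by (simp only: zp_eq_Nil)
    then show ?thesis using True 1(2) by (simp only: sb_nil)
  next
    case False
    have F': "dropWhile (\<lambda>x. x = 0) v' \<noteq> []"
    proof
      assume "dropWhile (\<lambda>x. x = 0) v' = []"
      then have "zp (dropWhile (\<lambda>x. x = 0) l) = []" using d by (simp only: zp_simps(1))
      then show False using False by (simp only: zp_eq_Nil)
    qed
    have h: "(hd (dropWhile (\<lambda>x. x = 0) l) = 0) = (hd (dropWhile (\<lambda>x. x = 0) v') = 0)"
      using d zp_hd[OF False] zp_hd[OF F'] by simp
    have t: "zp (tl (dropWhile (\<lambda>x. x = 0) l)) = zp (tl (dropWhile (\<lambda>x. x = 0) v'))"
      using d by (simp only: zp_simps)
    have t2: "zp (takeWhile (\<lambda>x. 0 < x) (tl (dropWhile (\<lambda>x. x = 0) l))) = zp (takeWhile (\<lambda>x. 0 < x) (tl (dropWhile (\<lambda>x. x = 0) v')))"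
      using t by (simp only: zp_tWp)
    have IH: "zp (swapblocks (dropWhile (\<lambda>x. 0 < x) (tl (dropWhile (\<lambda>x. x = 0) l)))) =
       zp (swapblocks (dropWhile (\<lambda>x. 0 < x) (tl (dropWhile (\<lambda>x. x = 0) v'))))"
      by (rule 1(1)[OF refl refl False]) (use t in \<open>simp only: zp_dWp\<close>)
    show ?thesis unfolding sb_cons[OF False] sb_cons[OF F'] zp_simps(2,3) h tw t2 IH ..
  qed
qed

lemma F3_len: "length (F3 w) = length w"
proof (induction w rule: F3.induct)
  case (1 w)
  show ?case
    using 1[OF _ refl refl refl refl]
    by (subst F3.simps) (auto simp: Let_def swapblocks_len)
qed

lemma Zero_zp: "Zero w = {i. 1 \<le> i \<and> i \<le> length w \<and> zp w ! (i - 1)}"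
  unfolding Zero_def zp_def by auto

lemma Zero_iff_zp: "length w = length w'' \<Longrightarrow> (Zero w = Zero w'') = (zp w = zp w'')"
proof
  assume l: "length w = length w''" and z: "Zero w = Zero w''"
  show "zp w = zp w''"
  proof (rule nth_equalityI)
    show "length (zp w) = length (zp w'')" using l by simp
    fix i assume "i < length (zp w)"
    then have "(Suc i \<in> Zero w) = zp w ! i" "(Suc i \<in> Zero w'') = zp w'' ! i"
      using l by (auto simp: Zero_zp)
    then show "zp w ! i = zp w'' ! i" using z by simp
  qed
next
  assume "length w = length w''" "zp w = zp w''"
  then show "Zero w = Zero w''" by (simp add: Zero_zp)
qed

lemma Pos_len: "length (Pos w) = length (filter Not (zp w))"
  by (induction w) (auto simp: Pos_def)

lemma Pos_butlast: "w \<noteq> [] \<Longrightarrow> Pos (butlast w) = (if last w = 0 then Pos w else butlast (Pos w))"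
proof -
  assume "w \<noteq> []"
  then obtain u b where w: "w = u @ [b]" by (metis append_butlast_last_id)
  show ?thesis unfolding w by (simp add: Pos_def)
qed

lemma DES_butlast: "DES (butlast l) = {i \<in> DES l. i + 2 \<le> length l}"
  unfolding DES_def by (auto simp: nth_butlast)

lemma last_pos_decomp:
  fixes u :: "nat list"
  assumes "\<not> (\<forall>x\<in>set u. x = 0)"
  shows "\<exists>u0 a zs. u = u0 @ a # zs \<and> 0 < a \<and> (\<forall>z\<in>set zs. z = 0)"
proof -
  let ?d = "dropWhile (\<lambda>x. x = 0) (rev u)"
  let ?t = "takeWhile (\<lambda>x. x = 0) (rev u)"
  have ne: "?d \<noteq> []" using assms by auto
  have h: "hd ?d \<noteq> 0" using hd_dropWhile[OF ne] .
  have "rev u = ?t @ hd ?d # tl ?d" by (simp only: hd_Cons_tl[OF ne] takeWhile_dropWhile_id)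
  then have "rev (rev u) = rev (?t @ hd ?d # tl ?d)" by (rule arg_cong)
  then have u: "u = rev (tl ?d) @ hd ?d # rev ?t"
    by (simp only: rev_rev_ident rev_append rev.simps append_assoc append_Cons append_Nil)
  have z: "\<forall>z\<in>set (rev ?t). z = 0"
  proof
    fix z assume "z \<in> set (rev ?t)"
    then have "z \<in> set ?t" by (simp only: set_rev)
    then show "z = 0" by (rule set_takeWhileD[THEN conjunct2])
  qed
  have p: "0 < hd ?d" using h by simp
  show ?thesis
    by (rule exI[of _ "rev (tl ?d)"], rule exI[of _ "hd ?d"], rule exI[of _ "rev ?t"]) (intro conjI u p z)
qed

lemma cond_char:
  assumes "\<not> (\<forall>x\<in>set (butlast w). x = 0)"
  shows "(butlast w ! (length (butlast w) - length (takeWhile (\<lambda>x. x = 0) (rev (butlast w))) - 1) \<le> last w)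
     = (last w \<noteq> 0 \<and> length (Pos w) - 1 \<notin> DES (Pos w))"
proof -
  from assms have wne: "w \<noteq> []" by auto
  obtain u0 a zs where u: "butlast w = u0 @ a # zs" and a: "0 < a" and zs: "\<forall>z\<in>set zs. z = 0"
    using last_pos_decomp[OF assms] by blast
  have tw: "takeWhile (\<lambda>x. x = 0) (rev (butlast w)) = rev zs"
  proof -
    have "takeWhile (\<lambda>x. x = 0) (rev zs @ a # rev u0) = rev zs @ takeWhile (\<lambda>x. x = 0) (a # rev u0)"
      by (rule takeWhile_append2) (use zs in auto)
    then show ?thesis unfolding u using a by simp
  qed
  have idx: "butlast w ! (length (butlast w) - length (takeWhile (\<lambda>x. x = 0) (rev (butlast w))) - 1) = a"
    unfolding tw unfolding u by (simp add: nth_append)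
  have w: "w = u0 @ a # zs @ [last w]" using u wne by (metis append_butlast_last_id append_Cons append_assoc)
  have pz: "Pos zs = []" using zs by (simp add: Pos_def filter_empty_conv)
  show ?thesis
  proof (cases "last w = 0")
    case True
    then show ?thesis unfolding idx using a by simp
  next
    case False
    have P: "Pos w = Pos u0 @ [a, last w]" 
      apply (subst w) using pz False a by (simp add: Pos_def)
    show ?thesis unfolding idx P using False by (auto simp: DES_def nth_append)
  qed
qed

lemma allzero_zp: "(\<forall>x\<in>set u. x = 0) = (\<forall>b\<in>set (zp u). b)"
  by (auto simp: zp_def)

lemma last_zp: "w \<noteq> [] \<Longrightarrow> last (zp w) = (last w = 0)"
  by (simp add: zp_def last_map)

lemma main_zp:
  "length w = length w'' \<Longrightarrow> zp w = zp w'' \<Longrightarrow> DES (Pos w) = DES (Pos w'') \<Longrightarrow> zp (F3 w) = zp (F3 w'')"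
proof (induction "length w" arbitrary: w w'' rule: less_induct)
  case less
  note L = less.prems(1) and Z = less.prems(2) and D = less.prems(3)
  have Ceq: "(length w \<le> 1 \<or> (\<forall>x\<in>set (butlast w). x = 0)) = (length w'' \<le> 1 \<or> (\<forall>x\<in>set (butlast w''). x = 0))"
    using L Z by (simp only: allzero_zp zp_simps)
  show ?case
  proof (cases "length w \<le> 1 \<or> (\<forall>x\<in>set (butlast w). x = 0)")
    case True
    then have "F3 w = w" by (subst F3.simps) simp
    moreover have "F3 w'' = w''" using True Ceq by (subst F3.simps) simp
    ultimately show ?thesis using Z by simp
  next
    case False
    have False'': "\<not> (length w'' \<le> 1 \<or> (\<forall>x\<in>set (butlast w''). x = 0))" using False Ceq by blast
    have wne: "w \<noteq> []" and wne'': "w'' \<noteq> []" using False False'' by auto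
    have lz: "(last w = 0) = (last w'' = 0)" 
    proof -
      have "last (zp w) = last (zp w'')" using Z by simp
      then show ?thesis by (simp only: last_zp[OF wne] last_zp[OF wne''])
    qed
    have lP: "length (Pos w) = length (Pos w'')" using Z by (simp add: Pos_len)
    have Du: "DES (Pos (butlast w)) = DES (Pos (butlast w''))"
      using D lz lP by (simp add: Pos_butlast[OF wne] Pos_butlast[OF wne''] DES_butlast)
    have IH: "zp (F3 (butlast w)) = zp (F3 (butlast w''))"
      by (rule less.hyps[OF _ _ _ Du]) (use L Z wne wne'' in auto)
    have lu: "length (F3 (butlast w)) = length (F3 (butlast w''))" using L by (simp add: F3_len)
    have req: "length (takeWhile (\<lambda>x. x = 0) (rev (butlast w))) = length (takeWhile (\<lambda>x. x = 0) (rev (butlast w'')))"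
    proof -
      have "zp (takeWhile (\<lambda>x. x = 0) (rev (butlast w))) = zp (takeWhile (\<lambda>x. x = 0) (rev (butlast w'')))"
        by (simp only: zp_tW0 zp_simps Z)
      then have "length (zp (takeWhile (\<lambda>x. x = 0) (rev (butlast w)))) = length (zp (takeWhile (\<lambda>x. x = 0) (rev (butlast w''))))"
        by (rule arg_cong)
      then show ?thesis by (simp only: zp_simps(7))
    qed
    have ceq: "(butlast w ! (length (butlast w) - length (takeWhile (\<lambda>x. x = 0) (rev (butlast w))) - 1) \<le> last w)
      = (butlast w'' ! (length (butlast w'') - length (takeWhile (\<lambda>x. x = 0) (rev (butlast w''))) - 1) \<le> last w'')"
    proof -
      have n1: "\<not> (\<forall>x\<in>set (butlast w). x = 0)" using False by blast
      have n2: "\<not> (\<forall>x\<in>set (butlast w''). x = 0)" using False'' by blast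
      show ?thesis by (simp only: cond_char[OF n1] cond_char[OF n2] lz lP D)
    qed
    have e1: "F3 w = (let u = butlast w; b = last w;
            r = length (takeWhile (\<lambda>x. x = 0) (rev u));
            a = u ! (length u - r - 1)
        in if a \<le> b then F3 u @ [b]
           else if 1 \<le> r then 0 # butlast (F3 u) @ [b]
           else swapblocks (F3 u) @ [b])" by (subst F3.simps, rule if_not_P[OF False])
    have e2: "F3 w'' = (let u = butlast w''; b = last w'';
            r = length (takeWhile (\<lambda>x. x = 0) (rev u));
            a = u ! (length u - r - 1)
        in if a \<le> b then F3 u @ [b]
           else if 1 \<le> r then 0 # butlast (F3 u) @ [b]
           else swapblocks (F3 u) @ [b])" by (subst F3.simps, rule if_not_P[OF False''])
    define c where "c = (butlast w'' ! (length (butlast w'') - length (takeWhile (\<lambda>x. x = 0) (rev (butlast w''))) - 1) \<le> last w'')"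
    define r where "r = length (takeWhile (\<lambda>x. x = 0) (rev (butlast w'')))"
    have e1': "F3 w = (if c then F3 (butlast w) @ [last w]
           else if 1 \<le> r then 0 # butlast (F3 (butlast w)) @ [last w]
           else swapblocks (F3 (butlast w)) @ [last w])"
      unfolding e1 Let_def c_def r_def by (simp only: ceq, simp only: req)
    have e2': "F3 w'' = (if c then F3 (butlast w'') @ [last w'']
           else if 1 \<le> r then 0 # butlast (F3 (butlast w'')) @ [last w'']
           else swapblocks (F3 (butlast w'')) @ [last w''])"
      unfolding e2 Let_def c_def r_def by (rule refl)
    show ?thesis
    proof (cases c)
      case True
      then show ?thesis unfolding e1' e2' by (simp only: if_True zp_simps(1,2,3) IH lz)
    next
      case c: False
      show ?thesis
      proof (cases "1 \<le> r")
        case True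
        then show ?thesis unfolding e1' e2' using c by (simp only: if_True if_False zp_simps(1,2,3,4) IH lz)
      next
        case False
        then show ?thesis unfolding e1' e2' using c by (simp only: if_False zp_simps(1,2,3) swapblocks_zp[OF IH] lz)
      qed
    qed
  qed
qed

theorem proposition4p1:
  fixes w w'' :: "nat list"
  assumes "length w = length w''"
    and "Zero w = Zero w''"
    and "DES (Pos w) = DES (Pos w'')"
  shows "Zero (F3 w) = Zero (F3 w'')"
proof -
  have z: "zp w = zp w''" using assms(1,2) Zero_iff_zp by blast
  have "zp (F3 w) = zp (F3 w'')" by (rule main_zp[OF assms(1) z assms(3)])
  moreover have "length (F3 w) = length (F3 w'')" using assms(1) by (simp add: F3_len)
  ultimately show ?thesis using Zero_iff_zp by blast
qed

end
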